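(* Let $G$ be a finite simple graph without isolated edges and without isolated triangles. Then the edges of $G$ can be colored with $a(G)$ colors so that each color class induces a forest without isolated edges.
   Context: The arboricity $a(G)$ is the least number of forests into which the edge set of $G$ can be decomposed. An isolated edge of a graph is a connected component isomorphic to $K_2$; an isolated triangle is a connected component isomorphic to $K_3$. A forest induced by a color class has no isolated edges if none of its components consists of a single edge. *)

theory Defs
  imports Main
begin

definition simple_graph :: "'a set \<Rightarrow> 'a set set \<Rightarrow> bool" where
  "simple_graph V E \<longleftrightarrow> finite V \<and>
     (\<forall>e\<in>E. \<exists>u v. u \<noteq> v \<and> u \<in> V \<and> v \<in> V \<and> e = {u, v})"

definition has_cycle :: "'a set set \<Rightarrow> bool" where
  "has_cycle F \<longleftrightarrow> (\<exists>vs. length vs \<ge> 3 \<and> distinct vs \<and>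
     (\<forall>i < length vs. {vs ! i, vs ! ((i + 1) mod length vs)} \<in> F))"

definition is_forest :: "'a set set \<Rightarrow> bool" where
  "is_forest F \<longleftrightarrow> \<not> has_cycle F"

definition arboricity :: "'a set set \<Rightarrow> nat" where
  "arboricity E = (LEAST k. \<exists>c :: 'a set \<Rightarrow> nat. (\<forall>e\<in>E. c e < k) \<and>
                      (\<forall>i<k. is_forest {e\<in>E. c e = i}))"

definition has_isolated_edge :: "'a set set \<Rightarrow> bool" where
  "has_isolated_edge E \<longleftrightarrow> (\<exists>e\<in>E. \<forall>e'\<in>E. e' \<noteq> e \<longrightarrow> e' \<inter> e = {})"

definition has_isolated_triangle :: "'a set set \<Rightarrow> bool" where
  "has_isolated_triangle E \<longleftrightarrow> (\<exists>a b c. a \<noteq> b \<and> b \<noteq> c \<and> a \<noteq> c \<and>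
     {a, b} \<in> E \<and> {b, c} \<in> E \<and> {a, c} \<in> E \<and>
     (\<forall>e\<in>E. e \<inter> {a, b, c} \<noteq> {} \<longrightarrow> e \<subseteq> {a, b, c}))"

end

theory Submission
  imports Defs
begin


definition cyc :: "'a set set \<Rightarrow> 'a list \<Rightarrow> bool" where
  "cyc F vs \<longleftrightarrow> length vs \<ge> 3 \<and> distinct vs \<and>
     (\<forall>i < length vs. {vs ! i, vs ! ((i + 1) mod length vs)} \<in> F)"

lemma has_cycle_cyc: "has_cycle F \<longleftrightarrow> (\<exists>vs. cyc F vs)"
  unfolding has_cycle_def cyc_def by blast

lemma cyc_rotate:
  assumes "cyc F vs" shows "cyc F (rotate m vs)"
proof -
  let ?n = "length vs"
  have n: "?n \<ge> 3" "distinct vs" and E: "\<forall>i < ?n. {vs ! i, vs ! ((i + 1) mod ?n)} \<in> F"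
    using assms unfolding cyc_def by auto
  have "{rotate m vs ! i, rotate m vs ! ((i + 1) mod ?n)} \<in> F" if i: "i < ?n" for i
  proof -
    have "rotate m vs ! i = vs ! ((m + i) mod ?n)" using i by (simp add: nth_rotate)
    moreover have "rotate m vs ! ((i + 1) mod ?n) = vs ! ((m + (i + 1) mod ?n) mod ?n)"
      using n by (intro nth_rotate mod_less_divisor) linarith
    moreover have "(m + (i + 1) mod ?n) mod ?n = ((m + i) mod ?n + 1) mod ?n"
      by (simp add: mod_Suc_eq mod_add_right_eq)
    moreover have "(m + i) mod ?n < ?n" by (rule mod_less_divisor) (use n in linarith)
    ultimately show ?thesis using E by metis
  qed
  then show ?thesis using n unfolding cyc_def by simp
qed

lemma dist_nth: "distinct ws \<Longrightarrow> i < length ws \<Longrightarrow> j < length ws \<Longrightarrow> i \<noteq> j \<Longrightarrow> ws ! i \<noteq> ws ! j"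
  by (simp add: nth_eq_iff_index_eq)

lemma forest_mono: "is_forest F \<Longrightarrow> G \<subseteq> F \<Longrightarrow> is_forest G"
  unfolding is_forest_def has_cycle_def by blast

lemma forest_pendant:
  assumes F: "is_forest F" and fr: "\<forall>s\<in>F. a \<notin> s" and ab: "a \<noteq> b"
  shows "is_forest (insert {a,b} F)"
proof -
  { fix vs assume c: "cyc (insert {a,b} F) vs"
    let ?n = "length vs"
    have False
    proof (cases "a \<in> set vs")
      case False
      have "\<forall>i < ?n. {vs ! i, vs ! ((i + 1) mod ?n)} \<in> F"
      proof (intro allI impI)
        fix i assume i: "i < ?n"
        then have "(i + 1) mod ?n < ?n" by (metis mod_less_divisor gr_implies_not0 neq0_conv)
        then have "a \<noteq> vs ! i" "a \<noteq> vs ! ((i + 1) mod ?n)" using False i by (auto simp: in_set_conv_nth)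
        then show "{vs ! i, vs ! ((i + 1) mod ?n)} \<in> F" using c i unfolding cyc_def by auto
      qed
      then have "cyc F vs" using c unfolding cyc_def by auto
      then show False using F unfolding is_forest_def has_cycle_cyc by blast
    next
      case True
      then obtain p where p: "p < ?n" "vs ! p = a" by (auto simp: in_set_conv_nth)
      define ws where "ws = rotate p vs"
      have cw: "cyc (insert {a,b} F) ws" using c cyc_rotate ws_def by blast
      have lw: "length ws = ?n" by (simp add: ws_def)
      have n3: "?n \<ge> 3" "distinct ws" using cw lw unfolding cyc_def by auto
      have w0: "ws ! 0 = a" using p unfolding ws_def by (subst nth_rotate) auto
      have ew: "\<forall>i < ?n. {ws ! i, ws ! ((i + 1) mod ?n)} \<in> insert {a,b} F"
        using cw lw unfolding cyc_def by simp
      have "(0 + 1) mod ?n = 1" using n3 by simp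
      then have e0: "{ws ! 0, ws ! 1} \<in> insert {a,b} F" using ew n3 by (metis less_le_trans zero_less_numeral)
      have "?n - 1 + 1 = ?n" using n3 by simp
      then have "(?n - 1 + 1) mod ?n = 0" by simp
      then have e1: "{ws ! (?n - 1), ws ! 0} \<in> insert {a,b} F" using ew n3
        by (metis diff_less less_le_trans zero_less_numeral zero_less_one)
      have "ws ! 1 \<noteq> a" "ws ! (?n - 1) \<noteq> a" "ws ! 1 \<noteq> ws ! (?n - 1)"
      proof -
        have a1: "0 < ?n" "1 < ?n" "?n - 1 < ?n" "?n - 1 \<noteq> 1" "?n - 1 \<noteq> 0" using n3 by linarith+
        show "ws ! 1 \<noteq> a" using dist_nth[of ws 1 0] a1 n3 lw w0 by simp
        show "ws ! (?n - 1) \<noteq> a" using dist_nth[of ws "?n - 1" 0] a1 n3 lw w0 by simp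
        show "ws ! 1 \<noteq> ws ! (?n - 1)" using dist_nth[of ws 1 "?n - 1"] a1 n3 lw by simp
      qed
      then show False using e0 e1 fr w0 ab by auto
    qed }
  then show ?thesis unfolding is_forest_def has_cycle_cyc by blast
qed

lemma cyc_path:
  assumes F: "is_forest F" and hc: "has_cycle (insert {a,b} F)"
  shows "\<exists>ws. length ws \<ge> 3 \<and> distinct ws \<and> {ws!0, ws!(length ws - 1)} = {a,b} \<and>
           (\<forall>k. Suc k < length ws \<longrightarrow> {ws!k, ws!Suc k} \<in> F)"
proof -
  obtain vs where c: "cyc (insert {a,b} F) vs" using hc has_cycle_cyc by blast
  let ?n = "length vs"
  have n3: "?n \<ge> 3" and ev: "\<forall>i < ?n. {vs ! i, vs ! ((i + 1) mod ?n)} \<in> insert {a,b} F"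
    using c unfolding cyc_def by auto
  have "\<exists>i<?n. {vs!i, vs!((i+1) mod ?n)} \<notin> F"
  proof (rule ccontr)
    assume "\<not> ?thesis"
    then have "cyc F vs" using c unfolding cyc_def by auto
    then show False using F unfolding is_forest_def has_cycle_cyc by blast
  qed
  then obtain i where i: "i < ?n" "{vs!i, vs!((i+1) mod ?n)} \<notin> F" by blast
  then have eab: "{vs!i, vs!((i+1) mod ?n)} = {a,b}" using ev by blast
  define ws where "ws = rotate (Suc i) vs"
  have cw: "cyc (insert {a,b} F) ws" using c cyc_rotate ws_def by blast
  have lw: "length ws = ?n" by (simp add: ws_def)
  have dw: "distinct ws" using cw unfolding cyc_def by auto
  have a1: "0 < ?n" "?n - 1 < ?n" "?n - 1 \<noteq> 1" "?n - 1 \<noteq> 0" using n3 by linarith+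
  have "ws ! (?n - 1) = vs ! ((Suc i + (?n - 1)) mod ?n)"
    unfolding ws_def using a1 by (intro nth_rotate) simp
  also have "Suc i + (?n - 1) = i + ?n" using a1 by linarith
  finally have wl: "ws ! (?n - 1) = vs ! i" using i by simp
  have "ws ! 0 = vs ! ((Suc i + 0) mod ?n)"
    unfolding ws_def using a1 by (intro nth_rotate) simp
  then have w0: "ws ! 0 = vs ! ((i + 1) mod ?n)" by simp
  have ends: "{ws!0, ws!(length ws - 1)} = {a,b}" using eab wl w0 lw by auto
  have ew: "\<forall>k < ?n. {ws ! k, ws ! ((k + 1) mod ?n)} \<in> insert {a,b} F"
    using cw lw unfolding cyc_def by simp
  have "{ws!k, ws!Suc k} \<in> F" if k: "Suc k < ?n" for k
  proof -
    have "(k + 1) mod ?n = Suc k" using k by simp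
    then have ek: "{ws!k, ws!Suc k} \<in> insert {a,b} F" using ew k by (metis Suc_lessD)
    show ?thesis
    proof (rule ccontr)
      assume "{ws!k, ws!Suc k} \<notin> F"
      then have "{ws!k, ws!Suc k} = {ws!0, ws!(?n - 1)}" using ek ends lw by auto
      then have "ws!k \<in> {ws!0, ws!(?n - 1)}" "ws!Suc k \<in> {ws!0, ws!(?n - 1)}" by auto
      moreover have "ws!k \<noteq> ws!(?n - 1)" using dist_nth[of ws k "?n - 1"] dw lw k a1 by simp
      moreover have "ws!Suc k \<noteq> ws!0" using dist_nth[of ws "Suc k" 0] dw lw k a1 by simp
      ultimately have "ws!k = ws!0" "ws!Suc k = ws!(?n - 1)" by auto
      then have "k = 0" "Suc k = ?n - 1"
        using dist_nth[of ws k 0] dist_nth[of ws "Suc k" "?n - 1"] dw lw k a1 by (auto simp del: One_nat_def)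
      then show False using a1 by simp
    qed
  qed
  then show ?thesis using n3 lw dw ends by (intro exI[of _ ws]) auto
qed



definition isol :: "'a set set \<Rightarrow> 'a set \<Rightarrow> bool" where
  "isol F x \<longleftrightarrow> (\<forall>y\<in>F. y \<noteq> x \<longrightarrow> y \<inter> x = {})"

definition crit :: "'a set set \<Rightarrow> 'a set \<Rightarrow> bool" where
  "crit F f \<longleftrightarrow> (\<exists>g\<in>F. g \<noteq> f \<and> g \<inter> f \<noteq> {} \<and> isol (F - {f}) g)"

lemma tri:
  assumes len: "length ws \<ge> 3" and dw: "distinct ws"
    and P: "\<forall>k. Suc k < length ws \<longrightarrow> {ws!k, ws!Suc k} \<in> F"
    and cr: "\<forall>f\<in>F. ws!0 \<in> f \<longrightarrow> crit F f"
  shows "length ws = 3 \<and> (\<forall>h\<in>F. h \<inter> {ws!1, ws!2} \<noteq> {} \<longrightarrow> h = {ws!0,ws!1} \<or> h = {ws!1,ws!2})"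
proof -
  let ?n = "length ws"
  have ne: "ws \<noteq> []" using len by (metis list.size(3) not_numeral_le_zero)
  have d01: "ws!0 \<noteq> ws!1" using dist_nth[of ws 0 1] dw len ne by simp
  have d02: "ws!0 \<noteq> ws!2" using dist_nth[of ws 0 2] dw len ne by simp
  have d12: "ws!1 \<noteq> ws!2" using dist_nth[of ws 1 2] dw len ne by simp
  have f: "{ws!0, ws!1} \<in> F" using P[rule_format, of 0] len by simp
  have e12: "{ws!1, ws!2} \<in> F" using P[rule_format, of 1] len by (simp add: numeral_2_eq_2)
  obtain g where g: "g \<in> F" "g \<noteq> {ws!0, ws!1}" "g \<inter> {ws!0, ws!1} \<noteq> {}"
    and gi: "isol (F - {{ws!0, ws!1}}) g"
  proof -
    have "ws!0 \<in> {ws!0, ws!1}" by simp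
    then have "crit F {ws!0, ws!1}" using cr f by blast
    then show ?thesis using that unfolding crit_def by blast
  qed
  show ?thesis
  proof (cases "ws!1 \<in> g")
    case True
    have "g = {ws!1, ws!2}"
    proof (rule ccontr)
      assume "g \<noteq> {ws!1, ws!2}"
      moreover have "{ws!1, ws!2} \<noteq> {ws!0, ws!1}" using d01 d02 d12 by (auto simp: doubleton_eq_iff)
      ultimately have "{ws!1, ws!2} \<inter> g = {}" using gi e12 unfolding isol_def by auto
      then show False using True by auto
    qed
    note gdef = this
    have l3: "?n = 3"
    proof (rule ccontr)
      assume "?n \<noteq> 3"
      then have l4: "?n > 3" using len by simp
      have e23: "{ws!2, ws!3} \<in> F" using P[rule_format, of 2] l4 by (simp add: numeral_3_eq_3 numeral_2_eq_2)
      have "ws!3 \<noteq> ws!1" using dist_nth[of ws 3 1] dw l4 ne by simp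
      moreover have "ws!3 \<noteq> ws!2" using dist_nth[of ws 3 2] dw l4 ne by simp
      moreover have "ws!3 \<noteq> ws!0" using dist_nth[of ws 3 0] dw l4 ne by simp
      ultimately have "{ws!2, ws!3} \<noteq> g" "{ws!2, ws!3} \<noteq> {ws!0, ws!1}" using gdef d02 d12
        by (auto simp: doubleton_eq_iff)
      then have "{ws!2, ws!3} \<inter> g = {}" using gi e23 unfolding isol_def by auto
      then show False using gdef by auto
    qed
    have "h = {ws!0,ws!1} \<or> h = {ws!1,ws!2}" if h: "h \<in> F" "h \<inter> {ws!1, ws!2} \<noteq> {}" for h
      using gi h gdef unfolding isol_def by auto
    then show ?thesis using l3 by blast
  next
    case False
    then have "ws!0 \<in> g" using g by auto
    then have "crit F g" using cr g by blast
    then obtain g2 where g2: "g2 \<in> F" "g2 \<noteq> g" "g2 \<inter> g \<noteq> {}" and g2i: "isol (F - {g}) g2"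
      unfolding crit_def by blast
    have "g2 = {ws!0, ws!1}"
    proof (rule ccontr)
      assume "g2 \<noteq> {ws!0, ws!1}"
      then have "g2 \<in> F - {{ws!0, ws!1}}" using g2 by blast
      moreover have "\<forall>y\<in>F - {{ws!0, ws!1}}. y \<noteq> g \<longrightarrow> y \<inter> g = {}" using gi by (simp add: isol_def)
      ultimately have "g2 \<inter> g = {}" using g2(2) by blast
      then show False using g2(3) by blast
    qed
    moreover have "{ws!1, ws!2} \<noteq> g" using False by auto
    moreover have "{ws!1, ws!2} \<noteq> {ws!0, ws!1}" using d01 d02 d12 by (auto simp: doubleton_eq_iff)
    ultimately have A: "{ws!1, ws!2} \<in> F - {g}" and B: "{ws!1, ws!2} \<noteq> g2" using e12 by auto
    have D: "\<forall>y\<in>F - {g}. y \<noteq> g2 \<longrightarrow> y \<inter> g2 = {}" using g2i by (simp add: isol_def)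
    have "{ws!1, ws!2} \<inter> g2 = {}" by (rule D[rule_format, OF A B])
    then show ?thesis using \<open>g2 = {ws!0, ws!1}\<close> by simp
  qed
qed



definition cls :: "'a set set \<Rightarrow> ('a set \<Rightarrow> nat) \<Rightarrow> nat \<Rightarrow> 'a set set" where
  "cls E c i = {e\<in>E. c e = i}"

definition iso :: "'a set set \<Rightarrow> ('a set \<Rightarrow> nat) \<Rightarrow> 'a set set" where
  "iso E c = {x\<in>E. \<forall>y\<in>E. c y = c x \<longrightarrow> y \<noteq> x \<longrightarrow> y \<inter> x = {}}"

definition valid :: "'a set set \<Rightarrow> nat \<Rightarrow> ('a set \<Rightarrow> nat) \<Rightarrow> bool" where
  "valid E k c \<longleftrightarrow> (\<forall>e\<in>E. c e < k) \<and> (\<forall>i<k. is_forest (cls E c i))"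

lemma pend2:
  assumes "is_forest F0" "\<forall>s\<in>F0. x \<notin> s \<and> y \<notin> s" "x \<noteq> y" "z \<noteq> x" "z \<noteq> y"
  shows "is_forest (insert {x,y} (insert {x,z} F0))"
proof -
  have "is_forest (insert {x,z} F0)" using assms by (intro forest_pendant) auto
  then have "is_forest (insert {y,x} (insert {x,z} F0))" using assms by (intro forest_pendant) auto
  then show ?thesis by (simp add: insert_commute)
qed

lemma join_iso:
  assumes F: "is_forest F" and eF: "e \<in> F" and ie: "\<forall>s\<in>F. s \<noteq> e \<longrightarrow> s \<inter> e = {}"
    and e: "e = {a,b}" "a \<noteq> b" and f: "f = {p,q}" "p \<noteq> q" "f \<noteq> e" "f \<inter> e \<noteq> {}"
  shows "is_forest (insert f F)"
proof -
  obtain x y z where xyz: "e = {x,y}" "f = {x,z}" "x \<noteq> y" "z \<noteq> x"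
    using e f by (metis Int_emptyI doubleton_eq_iff insertE insert_commute singletonD)
  have zy: "z \<noteq> y" using xyz f by auto
  let ?F0 = "F - {e}"
  have "is_forest ?F0" using F forest_mono by blast
  moreover have "\<forall>s\<in>?F0. x \<notin> s \<and> y \<notin> s" using ie xyz by auto
  ultimately have "is_forest (insert {x,y} (insert {x,z} ?F0))" using pend2 xyz zy by metis
  moreover have "insert {x,y} (insert {x,z} ?F0) = insert f F" using xyz eF by auto
  ultimately show ?thesis by simp
qed

lemma move_M2:
  assumes V: "valid E k c" and ei: "e \<in> iso E c" and e: "e = {a,b}" "a \<noteq> b"
    and f: "f \<in> E" "f = {p,q}" "p \<noteq> q" "f \<noteq> e" "f \<inter> e \<noteq> {}"
    and nc: "\<not> crit (cls E c (c f)) f"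
  shows "valid E k (c(f := c e)) \<and> iso E (c(f := c e)) \<subseteq> iso E c - {e}"
proof -
  let ?i = "c e" and ?j = "c f" and ?c = "c(f := c e)"
  have eE: "e \<in> E" and ie: "\<forall>y\<in>E. c y = ?i \<longrightarrow> y \<noteq> e \<longrightarrow> y \<inter> e = {}" using ei unfolding iso_def by auto
  have ji: "?j \<noteq> ?i" using ie f by auto
  have ck: "\<forall>x\<in>E. ?c x < k" using V eE unfolding valid_def by auto
  have "is_forest (cls E ?c l)" if l: "l < k" for l
  proof (cases "l = ?i")
    case True
    have "cls E ?c l = insert f (cls E c ?i)" using True f unfolding cls_def by auto
    moreover have "is_forest (insert f (cls E c ?i))"
      by (rule join_iso[OF _ _ _ e f(2-5)]) (use V eE ie in \<open>auto simp: valid_def cls_def\<close>)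
    ultimately show ?thesis by simp
  next
    case False
    have "cls E ?c l \<subseteq> cls E c l" using False unfolding cls_def by auto
    then show ?thesis using V l forest_mono unfolding valid_def by blast
  qed
  then have "valid E k ?c" using ck unfolding valid_def by auto
  moreover have "iso E ?c \<subseteq> iso E c - {e}"
  proof
    fix x assume "x \<in> iso E ?c"
    then have xE: "x \<in> E" and ix: "\<forall>y\<in>E. ?c y = ?c x \<longrightarrow> y \<noteq> x \<longrightarrow> y \<inter> x = {}"
      unfolding iso_def by auto
    have xe: "x \<noteq> e" using ix[rule_format, of f] f by auto
    have xf: "x \<noteq> f"
    proof
      assume xf: "x = f"
      have "?c e = ?c x" using xf f by simp
      moreover have "e \<inter> x \<noteq> {}" using xf f by (auto simp: Int_commute)
      ultimately show False using ix eE f xf by blast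
    qed
    have "y \<inter> x = {}" if y: "y \<in> E" "c y = c x" "y \<noteq> x" for y
    proof (cases "y = f")
      case True
      show ?thesis
      proof (rule ccontr)
        assume "y \<inter> x \<noteq> {}"
        moreover have "isol (cls E c ?j - {f}) x"
          unfolding isol_def cls_def using ix xf True y by auto
        ultimately have "crit (cls E c ?j) f"
          unfolding crit_def cls_def using True y xE xf by auto
        then show False using nc by simp
      qed
    next
      case False
      then show ?thesis using ix y xf by auto
    qed
    then show "x \<in> iso E c - {e}" using xE xe unfolding iso_def by auto
  qed
  ultimately show ?thesis by simp
qed

lemma move_M1:
  assumes V: "valid E k c" and ei: "e \<in> iso E c" and l: "l < k" "l \<noteq> c e"
    and F: "is_forest (insert e (cls E c l))" and t: "\<exists>y\<in>cls E c l. y \<inter> e \<noteq> {}"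
  shows "valid E k (c(e := l)) \<and> iso E (c(e := l)) \<subseteq> iso E c - {e}"
proof -
  let ?i = "c e" and ?c = "c(e := l)"
  have eE: "e \<in> E" and ie: "\<forall>y\<in>E. c y = ?i \<longrightarrow> y \<noteq> e \<longrightarrow> y \<inter> e = {}" using ei unfolding iso_def by auto
  have ck: "\<forall>x\<in>E. ?c x < k" using V l unfolding valid_def by auto
  have "is_forest (cls E ?c l')" if l': "l' < k" for l'
  proof (cases "l' = l")
    case True
    have "cls E ?c l' = insert e (cls E c l)" using True eE unfolding cls_def by auto
    then show ?thesis using F by simp
  next
    case False
    have "cls E ?c l' \<subseteq> cls E c l'" using False unfolding cls_def by auto
    then show ?thesis using V l' forest_mono unfolding valid_def by blast
  qed
  then have "valid E k ?c" using ck unfolding valid_def by auto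
  moreover have "iso E ?c \<subseteq> iso E c - {e}"
  proof
    fix x assume "x \<in> iso E ?c"
    then have xE: "x \<in> E" and ix: "\<forall>y\<in>E. ?c y = ?c x \<longrightarrow> y \<noteq> x \<longrightarrow> y \<inter> x = {}"
      unfolding iso_def by auto
    have xe: "x \<noteq> e"
    proof
      assume "x = e"
      then show False using ix t l unfolding cls_def by (auto simp: Int_commute)
    qed
    have "y \<inter> x = {}" if y: "y \<in> E" "c y = c x" "y \<noteq> x" for y
    proof (cases "y = e")
      case True
      then show ?thesis using ie y xe xE by (auto simp: Int_commute)
    next
      case False
      then show ?thesis using ix y xe by auto
    qed
    then show "x \<in> iso E c - {e}" using xE xe unfolding iso_def by auto
  qed
  ultimately show ?thesis by simp
qed



lemma move_swap:
  assumes V: "valid E k c" and ei: "e \<in> iso E c"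
    and r: "r \<in> E" "c r = j" "j \<noteq> c e" and l: "l < k" "l \<noteq> j"
    and s2: "s2 \<in> E" "c s2 = j" "s2 \<noteq> e" "s2 \<noteq> r" "s2 \<inter> e \<noteq> {}"
    and ex: "\<forall>x\<in>cls E c j. x \<inter> r \<noteq> {} \<longrightarrow> x = r \<or> x = s2"
    and Fj: "is_forest (insert e (cls E c j - {r}))"
    and Fl: "is_forest (insert r (cls E c l - {e}))"
    and nt: "\<exists>y\<in>cls E c l. y \<noteq> e \<and> y \<noteq> r \<and> y \<inter> r \<noteq> {}"
  shows "valid E k (c(e := j, r := l)) \<and> iso E (c(e := j, r := l)) \<subseteq> iso E c - {e}"
proof -
  let ?i = "c e" and ?c = "c(e := j, r := l)"
  have eE: "e \<in> E" and ie: "\<forall>y\<in>E. c y = ?i \<longrightarrow> y \<noteq> e \<longrightarrow> y \<inter> e = {}" using ei unfolding iso_def by auto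
  have re: "r \<noteq> e" using r by auto
  have ck: "\<forall>x\<in>E. ?c x < k" using V l r unfolding valid_def by auto
  have "is_forest (cls E ?c l')" if l': "l' < k" for l'
  proof -
    consider "l' = l" | "l' \<noteq> l" "l' = j" | "l' \<noteq> l" "l' \<noteq> j" by blast
    then show ?thesis
    proof cases
      case 1
      have "cls E ?c l' = insert r (cls E c l - {e})" using 1 re r l eE unfolding cls_def by auto
      then show ?thesis using Fl by simp
    next
      case 2
      have "cls E ?c l' = insert e (cls E c j - {r})" using 2 re r l eE unfolding cls_def by auto
      then show ?thesis using Fj by simp
    next
      case 3
      have "cls E ?c l' \<subseteq> cls E c l'" using 3 unfolding cls_def by auto
      then show ?thesis using V l' forest_mono unfolding valid_def by blast
    qed
  qed
  then have "valid E k ?c" using ck unfolding valid_def by auto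
  moreover have "iso E ?c \<subseteq> iso E c - {e}"
  proof
    fix x assume "x \<in> iso E ?c"
    then have xE: "x \<in> E" and ix: "\<forall>y\<in>E. ?c y = ?c x \<longrightarrow> y \<noteq> x \<longrightarrow> y \<inter> x = {}"
      unfolding iso_def by auto
    have xe: "x \<noteq> e"
    proof
      assume xe: "x = e"
      have "?c s2 = ?c x" using xe s2 re by simp
      moreover have "s2 \<inter> x \<noteq> {}" using xe s2 by simp
      ultimately show False using ix s2 xe by blast
    qed
    have xr: "x \<noteq> r"
    proof
      assume xr: "x = r"
      obtain y where y: "y \<in> cls E c l" "y \<noteq> e" "y \<noteq> r" "y \<inter> r \<noteq> {}" using nt by blast
      then show False using ix[rule_format, of y] xr unfolding cls_def by auto
    qed
    have "y \<inter> x = {}" if y: "y \<in> E" "c y = c x" "y \<noteq> x" for y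
    proof -
      consider "y = e" | "y = r" | "y \<noteq> e" "y \<noteq> r" by blast
      then show ?thesis
      proof cases
        case 1
        then show ?thesis using ie y xe xE by (auto simp: Int_commute)
      next
        case 2
        show ?thesis
        proof (rule ccontr)
          assume "y \<inter> x \<noteq> {}"
          then have "x = s2" using ex 2 y xr xE r unfolding cls_def by (auto simp: Int_commute)
          then show False using ix[rule_format, of e] eE s2 xr xe re by (auto simp: Int_commute)
        qed
      next
        case 3
        then show ?thesis using ix y xe xr by auto
      qed
    qed
    then show "x \<in> iso E c - {e}" using xE xe unfolding iso_def by auto
  qed
  ultimately show ?thesis by simp
qed



lemma apex_lemma:
  assumes V: "valid E k c" and e: "e = {a,b}" "a \<noteq> b"
    and crit_all: "\<forall>f\<in>E. f \<noteq> e \<longrightarrow> f \<inter> e \<noteq> {} \<longrightarrow> crit (cls E c (c f)) f"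
    and nf: "\<not> is_forest (insert e (cls E c l))"
    and l: "l < k" "l \<noteq> c e"
  shows "\<exists>w. w \<noteq> a \<and> w \<noteq> b \<and> {a,w} \<in> cls E c l \<and> {w,b} \<in> cls E c l \<and>
           (\<forall>h\<in>cls E c l. h \<inter> {a,b,w} \<noteq> {} \<longrightarrow> h = {a,w} \<or> h = {w,b})"
proof -
  let ?F = "cls E c l"
  have Ff: "is_forest ?F" using V l unfolding valid_def by auto
  have "has_cycle (insert {a,b} ?F)" using nf e unfolding is_forest_def by simp
  then obtain ws where ws: "length ws \<ge> 3" "distinct ws" "{ws!0, ws!(length ws - 1)} = {a,b}"
    and P: "\<forall>k. Suc k < length ws \<longrightarrow> {ws!k, ws!Suc k} \<in> ?F"
    using cyc_path[OF Ff] by blast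
  have cF: "crit ?F f" if f: "f \<in> ?F" "x \<in> f" "x \<in> {a,b}" for f x
  proof -
    have "f \<noteq> e" using f l unfolding cls_def by auto
    moreover have "f \<inter> e \<noteq> {}" using f e by auto
    ultimately show ?thesis using crit_all f unfolding cls_def by auto
  qed
  have ne: "ws \<noteq> []" using ws by (metis list.size(3) not_numeral_le_zero)
  have p0: "ws!0 \<in> {a,b}" using ws by auto
  have T1: "length ws = 3 \<and> (\<forall>h\<in>?F. h \<inter> {ws!1, ws!2} \<noteq> {} \<longrightarrow> h = {ws!0,ws!1} \<or> h = {ws!1,ws!2})"
    by (rule tri[OF ws(1,2) P]) (use cF p0 in blast)
  then have l3: "length ws = 3" by simp
  have d01: "ws!0 \<noteq> ws!1" using dist_nth[of ws 0 1] ws l3 by simp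
  have d02: "ws!0 \<noteq> ws!2" using dist_nth[of ws 0 2] ws l3 by simp
  have d12: "ws!1 \<noteq> ws!2" using dist_nth[of ws 1 2] ws l3 by simp
  have ab: "{ws!0, ws!2} = {a,b}" using ws l3 by simp
  have e01: "{ws!0, ws!1} \<in> ?F" using P[rule_format, of 0] l3 by simp
  have e12: "{ws!1, ws!2} \<in> ?F" using P[rule_format, of 1] l3 by (simp add: numeral_2_eq_2)
  let ?vs = "[ws!2, ws!1, ws!0]"
  have v1: "length ?vs \<ge> 3" "distinct ?vs" using d01 d02 d12 by auto
  have v2: "\<forall>k. Suc k < length ?vs \<longrightarrow> {?vs!k, ?vs!Suc k} \<in> ?F"
  proof (intro allI impI)
    fix k assume "Suc k < length ?vs"
    then have "k = 0 \<or> k = 1" by auto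
    then show "{?vs!k, ?vs!Suc k} \<in> ?F" using e01 e12 by (auto simp: insert_commute)
  qed
  have p2: "?vs!0 \<in> {a,b}" using ab by auto
  have T2: "length ?vs = 3 \<and> (\<forall>h\<in>?F. h \<inter> {?vs!1, ?vs!2} \<noteq> {} \<longrightarrow> h = {?vs!0,?vs!1} \<or> h = {?vs!1,?vs!2})"
    by (rule tri[OF v1 v2]) (use cF p2 in blast)
  then have T2': "\<forall>h\<in>?F. h \<inter> {ws!1, ws!0} \<noteq> {} \<longrightarrow> h = {ws!2,ws!1} \<or> h = {ws!1,ws!0}" by simp
  have all: "\<forall>h\<in>?F. h \<inter> {ws!0, ws!1, ws!2} \<noteq> {} \<longrightarrow> h = {ws!0,ws!1} \<or> h = {ws!1,ws!2}"
    using T1 T2' by (auto simp: insert_commute)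
  consider "ws!0 = a" "ws!2 = b" | "ws!0 = b" "ws!2 = a" using ab e d02 by (auto simp: doubleton_eq_iff)
  then show ?thesis
  proof cases
    case 1
    show ?thesis
      by (rule exI[of _ "ws!1"]) (use 1 d01 d02 d12 e01 e12 all in \<open>auto simp: insert_commute\<close>)
  next
    case 2
    show ?thesis
      by (rule exI[of _ "ws!1"]) (use 2 d01 d02 d12 e01 e12 all in \<open>auto simp: insert_commute\<close>)
  qed
qed



lemma key:
  assumes T: "\<forall>x\<in>E. \<exists>p q. p \<noteq> q \<and> x = {p,q}"
    and nie: "\<not> has_isolated_edge E" and nit: "\<not> has_isolated_triangle E"
    and V: "valid E k c" and ei: "e \<in> iso E c"
  shows "\<exists>c'. valid E k c' \<and> iso E c' \<subseteq> iso E c - {e}"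
proof (rule ccontr)
  assume nm: "\<not> ?thesis"
  have eE: "e \<in> E" and ie: "\<forall>y\<in>E. c y = c e \<longrightarrow> y \<noteq> e \<longrightarrow> y \<inter> e = {}"
    using ei unfolding iso_def by auto
  obtain a b where e: "e = {a,b}" "a \<noteq> b" using T eE by blast
  have ck: "\<forall>x\<in>E. c x < k" using V unfolding valid_def by auto
  have crit_all: "\<forall>f\<in>E. f \<noteq> e \<longrightarrow> f \<inter> e \<noteq> {} \<longrightarrow> crit (cls E c (c f)) f"
  proof (intro ballI impI)
    fix f assume f: "f \<in> E" "f \<noteq> e" "f \<inter> e \<noteq> {}"
    obtain p q where pq: "p \<noteq> q" "f = {p,q}" using T f by blast
    show "crit (cls E c (c f)) f"
    proof (rule ccontr)
      assume "\<not> crit (cls E c (c f)) f"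
      then have "valid E k (c(f := c e)) \<and> iso E (c(f := c e)) \<subseteq> iso E c - {e}"
        using move_M2[OF V ei e f(1) pq(2) pq(1) f(2,3)] by blast
      then show False using nm by blast
    qed
  qed
  have apex: "\<exists>w. w \<noteq> a \<and> w \<noteq> b \<and> {a,w} \<in> cls E c l \<and> {w,b} \<in> cls E c l \<and>
           (\<forall>h\<in>cls E c l. h \<inter> {a,b,w} \<noteq> {} \<longrightarrow> h = {a,w} \<or> h = {w,b})"
    if l: "l \<noteq> c e" and t: "\<exists>y\<in>cls E c l. y \<inter> e \<noteq> {}" for l
  proof -
    have lk: "l < k" using t ck unfolding cls_def by auto
    have "\<not> is_forest (insert e (cls E c l))"
    proof
      assume "is_forest (insert e (cls E c l))"
      then have "valid E k (c(e := l)) \<and> iso E (c(e := l)) \<subseteq> iso E c - {e}"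
        using move_M1[OF V ei lk l _ t] by blast
      then show False using nm by blast
    qed
    then show ?thesis using apex_lemma[OF V e crit_all _ lk l] by blast
  qed
  obtain y where y: "y \<in> E" "y \<noteq> e" "y \<inter> e \<noteq> {}"
    using nie eE unfolding has_isolated_edge_def by blast
  define j where "j = c y"
  have ji: "j \<noteq> c e" using ie y j_def by auto
  have jk: "j < k" using ck y j_def by auto
  have "\<exists>y\<in>cls E c j. y \<inter> e \<noteq> {}" using y j_def unfolding cls_def by auto
  then obtain w where w: "w \<noteq> a" "w \<noteq> b" "{a,w} \<in> cls E c j" "{w,b} \<in> cls E c j"
    and exj: "\<forall>h\<in>cls E c j. h \<inter> {a,b,w} \<noteq> {} \<longrightarrow> h = {a,w} \<or> h = {w,b}"
    using apex[OF ji] by blast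
  define r where "r = {a,w}"
  define s2 where "s2 = {w,b}"
  have r: "r \<in> E" "c r = j" using w r_def unfolding cls_def by auto
  have s2: "s2 \<in> E" "c s2 = j" "s2 \<noteq> e" "s2 \<noteq> r" "s2 \<inter> e \<noteq> {}"
    using w s2_def r_def e unfolding cls_def by (auto simp: doubleton_eq_iff)
  have ex: "\<forall>x\<in>cls E c j. x \<inter> r \<noteq> {} \<longrightarrow> x = r \<or> x = s2"
    using exj r_def s2_def by blast
  have Fjf: "is_forest (cls E c j)" using V jk unfolding valid_def by auto
  have Fj: "is_forest (insert e (cls E c j - {r}))"
  proof -
    have "is_forest (cls E c j - {r})" using Fjf forest_mono by blast
    moreover have "\<forall>s\<in>cls E c j - {r}. a \<notin> s"
    proof
      fix s assume s: "s \<in> cls E c j - {r}"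
      show "a \<notin> s"
      proof
        assume "a \<in> s"
        then have "s = r \<or> s = s2" using exj s r_def s2_def by blast
        then show False using s \<open>a \<in> s\<close> s2_def w e by auto
      qed
    qed
    ultimately show ?thesis using e forest_pendant by metis
  qed
  have "\<exists>h\<in>E. h \<inter> {a,b,w} \<noteq> {} \<and> \<not> h \<subseteq> {a,b,w}"
  proof (rule ccontr)
    assume "\<not> ?thesis"
    moreover have "{a,b} \<in> E" "{b,w} \<in> E" "{a,w} \<in> E"
      using eE e w unfolding cls_def by (auto simp: insert_commute)
    ultimately have "a \<noteq> b \<and> b \<noteq> w \<and> a \<noteq> w \<and> {a,b} \<in> E \<and> {b,w} \<in> E \<and> {a,w} \<in> E \<and>
        (\<forall>e\<in>E. e \<inter> {a,b,w} \<noteq> {} \<longrightarrow> e \<subseteq> {a,b,w})"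
      using e w by auto
    then have "has_isolated_triangle E" unfolding has_isolated_triangle_def
      by (rule exI[of _ a, OF exI[of _ b, OF exI[of _ w]]])
    then show False using nit by simp
  qed
  then obtain h where h: "h \<in> E" "h \<inter> {a,b,w} \<noteq> {}" "\<not> h \<subseteq> {a,b,w}" by blast
  define l where "l = c h"
  have lk: "l < k" using ck h l_def by auto
  have hr: "h \<noteq> r" using h r_def by auto
  have lj: "l \<noteq> j"
  proof
    assume "l = j"
    then have "h = {a,w} \<or> h = {w,b}" using exj h l_def unfolding cls_def by auto
    then show False using h by auto
  qed
  have "\<exists>c'. valid E k c' \<and> iso E c' \<subseteq> iso E c - {e}"
  proof (cases "l = c e")
    case True
    have hne: "h \<noteq> e" using h(3) e by auto
    have he: "h \<inter> e = {}" using ie h(1) True l_def hne by auto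
    then have wh: "w \<in> h" using h e by auto
    have Fl: "is_forest (insert r (cls E c l - {e}))"
    proof -
      have "is_forest (cls E c l)" using V lk unfolding valid_def by auto
      then have "is_forest (cls E c l - {e})" using forest_mono by blast
      moreover have "\<forall>s\<in>cls E c l - {e}. a \<notin> s" using ie e True unfolding cls_def by auto
      ultimately show ?thesis using r_def w forest_pendant by metis
    qed
    have nt: "\<exists>y\<in>cls E c l. y \<noteq> e \<and> y \<noteq> r \<and> y \<inter> r \<noteq> {}"
      using h l_def wh hr he e r_def unfolding cls_def by auto
    show ?thesis using move_swap[OF V ei r ji lk lj s2 ex Fj Fl nt] by blast
  next
    case False
    note lne = False
    have eNl: "e \<notin> cls E c l" using False unfolding cls_def by auto
    show ?thesis
    proof (cases "\<exists>y\<in>cls E c l. y \<inter> e \<noteq> {}")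
      case True
      then obtain w' where w': "w' \<noteq> a" "w' \<noteq> b" "{a,w'} \<in> cls E c l" "{w',b} \<in> cls E c l"
        and exl: "\<forall>h\<in>cls E c l. h \<inter> {a,b,w'} \<noteq> {} \<longrightarrow> h = {a,w'} \<or> h = {w',b}"
        using apex[OF lne] by blast
      have ww: "w' \<noteq> w"
      proof
        assume "w' = w"
        then have "{a,w} \<in> cls E c l" "{a,w} \<in> cls E c j" using w w' by auto
        then show False using lj unfolding cls_def by auto
      qed
      define F0 where "F0 = cls E c l - {{a,w'},{w',b}}"
      have "is_forest (cls E c l)" using V lk unfolding valid_def by auto
      then have f0: "is_forest F0" using forest_mono F0_def by blast
      have fr0: "\<forall>s\<in>F0. a \<notin> s \<and> w' \<notin> s \<and> b \<notin> s"
      proof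
        fix s assume s: "s \<in> F0"
        then have "s \<in> cls E c l" "s \<noteq> {a,w'}" "s \<noteq> {w',b}" using F0_def by auto
        then have "s \<inter> {a,b,w'} = {}" using exl by blast
        then show "a \<notin> s \<and> w' \<notin> s \<and> b \<notin> s" by auto
      qed
      have f1: "is_forest (insert {a,w} F0)" by (rule forest_pendant[OF f0]) (use fr0 w in auto)
      have f2: "is_forest (insert {w',a} (insert {a,w} F0))"
        by (rule forest_pendant[OF f1]) (use fr0 w' ww in auto)
      have f3: "is_forest (insert {b,w'} (insert {w',a} (insert {a,w} F0)))"
        by (rule forest_pendant[OF f2]) (use fr0 w' w e in auto)
      have "insert {b,w'} (insert {w',a} (insert {a,w} F0)) = insert r (cls E c l - {e})"
        using F0_def w' eNl r_def by (auto simp: insert_commute)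
      then have Fl: "is_forest (insert r (cls E c l - {e}))" using f3 by simp
      have nt: "\<exists>y\<in>cls E c l. y \<noteq> e \<and> y \<noteq> r \<and> y \<inter> r \<noteq> {}"
        using w' eNl ww r_def by (intro bexI[of _ "{a,w'}"]) (auto simp: doubleton_eq_iff)
      show ?thesis using move_swap[OF V ei r ji lk lj s2 ex Fj Fl nt] by blast
    next
      case False
      then have fr: "\<forall>s\<in>cls E c l. a \<notin> s \<and> b \<notin> s" using e by auto
      have wh: "w \<in> h" using h fr l_def unfolding cls_def by auto
      have Fl: "is_forest (insert r (cls E c l - {e}))"
      proof -
        have "is_forest (cls E c l)" using V lk unfolding valid_def by auto
        then have "is_forest (cls E c l - {e})" using forest_mono by blast
        moreover have "\<forall>s\<in>cls E c l - {e}. a \<notin> s" using fr by auto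
        ultimately show ?thesis using r_def w forest_pendant by metis
      qed
      have nt: "\<exists>y\<in>cls E c l. y \<noteq> e \<and> y \<noteq> r \<and> y \<inter> r \<noteq> {}"
        using h l_def wh hr eNl r_def unfolding cls_def by auto
      show ?thesis using move_swap[OF V ei r ji lk lj s2 ex Fj Fl nt] by blast
    qed
  qed
  then show False using nm by blast
qed



lemma forest_le1:
  assumes "\<forall>x\<in>F. \<forall>y\<in>F. x = y" shows "is_forest F"
proof -
  { fix vs assume c: "cyc F vs"
    then have l: "length vs \<ge> 3" "distinct vs" and ev: "\<forall>i<length vs. {vs ! i, vs ! ((i + 1) mod length vs)} \<in> F"
      unfolding cyc_def by auto
    have ne: "vs \<noteq> []" using l by (metis list.size(3) not_numeral_le_zero)
    have f1: "{vs!0, vs!1} \<in> F" using ev[rule_format, of 0] l ne by simp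
    have f2: "{vs!1, vs!2} \<in> F" using ev[rule_format, of 1] l ne by (simp add: numeral_2_eq_2)
    have eq: "{vs!0, vs!1} = {vs!1, vs!2}" using bspec[OF bspec[OF assms f1] f2] .
    have "vs!0 \<noteq> vs!1" "vs!0 \<noteq> vs!2" using dist_nth[of vs 0 1] dist_nth[of vs 0 2] l ne by auto
    then have False using eq by (auto simp: doubleton_eq_iff) }
  then show ?thesis unfolding is_forest_def has_cycle_cyc by blast
qed

theorem lemma1:
  fixes V :: "'a set" and E :: "'a set set"
  assumes "simple_graph V E"
    and "\<not> has_isolated_edge E"
    and "\<not> has_isolated_triangle E"
  shows "\<exists>c :: 'a set \<Rightarrow> nat. (\<forall>e\<in>E. c e < arboricity E) \<and>
           (\<forall>i < arboricity E. is_forest {e\<in>E. c e = i} \<and>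
                                \<not> has_isolated_edge {e\<in>E. c e = i})"
proof -
  have T: "\<forall>x\<in>E. \<exists>p q. p \<noteq> q \<and> x = {p,q}" using assms(1) unfolding simple_graph_def by blast
  have "E \<subseteq> Pow V"
  proof
    fix x assume "x \<in> E"
    then obtain u v where "u \<in> V" "v \<in> V" "x = {u,v}" using assms(1) unfolding simple_graph_def by blast
    then show "x \<in> Pow V" by simp
  qed
  moreover have "finite V" using assms(1) unfolding simple_graph_def by blast
  ultimately have finE: "finite E" by (meson finite_Pow_iff finite_subset)
  let ?k = "arboricity E"
  obtain h where h: "bij_betw h E {0..<card E}" using ex_bij_betw_finite_nat[OF finE] by blast
  have "valid E (card E) h"
    unfolding valid_def
  proof (intro conjI allI impI ballI)
    fix e assume "e \<in> E" then show "h e < card E" using h by (auto simp: bij_betw_def)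
  next
    fix i assume "i < card E"
    show "is_forest (cls E h i)"
      by (rule forest_le1) (use h in \<open>auto simp: cls_def bij_betw_def inj_on_def\<close>)
  qed
  then have "\<exists>k c. valid E k c" by blast
  then have "\<exists>c. valid E ?k c"
    unfolding arboricity_def valid_def cls_def by (rule LeastI_ex)
  then obtain c0 where "valid E ?k c0" by blast
  then obtain c where V: "valid E ?k c" and mn: "\<forall>c'. valid E ?k c' \<longrightarrow> card (iso E c) \<le> card (iso E c')"
    using ex_has_least_nat[of "\<lambda>c. valid E ?k c" c0 "\<lambda>c. card (iso E c)"] by blast
  have I: "iso E c = {}"
  proof (rule ccontr)
    assume "iso E c \<noteq> {}"
    then obtain e where ei: "e \<in> iso E c" by blast
    obtain c' where c': "valid E ?k c'" "iso E c' \<subseteq> iso E c - {e}"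
      using key[OF T assms(2,3) V ei] by blast
    have fi: "finite (iso E c)" using finE unfolding iso_def by simp
    have "card (iso E c') \<le> card (iso E c - {e})" using c'(2) fi by (intro card_mono) auto
    also have "\<dots> < card (iso E c)" by (rule card_Diff1_less[OF fi ei])
    finally show False using mn c'(1) by fastforce
  qed
  have "\<not> has_isolated_edge {e\<in>E. c e = i}" for i
  proof
    assume "has_isolated_edge {e\<in>E. c e = i}"
    then obtain x where x: "x \<in> E" "c x = i" "\<forall>e'\<in>{e\<in>E. c e = i}. e' \<noteq> x \<longrightarrow> e' \<inter> x = {}"
      unfolding has_isolated_edge_def by blast
    then have "x \<in> iso E c" unfolding iso_def by auto
    then show False using I by simp
  qed
  then show ?thesis using V unfolding valid_def cls_def by blast
qed

end
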